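(* Let $n\geq 3$. For $k\in\mathbb{N}$ let $\mathbb{D}_k:=\{2^{-j}:0\leq j\leq k\}$ and $$\mathscr{R}_k:=\Big\{[0,s_1]\times\cdots\times[0,s_{n-2}]\times\Big[0,\frac{2^{-(n-1)k}}{s_1\cdots s_{n-2}}\Big]: s_1,\dots,s_{n-2}\in\mathbb{D}_k\Big\}$$ (rectangles in $\mathbb{R}^{n-1}$), let $\mathscr{R}:=\bigcup_{k\in\mathbb{N}}\mathscr{R}_k$ and $\tilde{\mathscr{R}}:=\{R\times[0,1]:R\in\mathscr{R}\}$ (rectangles in $\mathbb{R}^n$). Then the projections of the rectangles of $\tilde{\mathscr{R}}$ onto the $x_{n-1}x_n$ coordinate plane form a family of finite width, and for every Orlicz function $\Phi$ with $\Phi=o(\Phi_{n-2})$ at $\infty$, $M_{\tilde{\mathscr{R}}}$ does not satisfy a weak $L^\Phi$ inequality.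
   Context: A family of rectangles has finite width if it is a finite union of subfamilies each totally ordered by inclusion. For measurable $f$, $M_{\tilde{\mathscr{R}}}f(x):=\sup\{\frac{1}{|R|}\int_{\tau(R)}|f|: R\in\tilde{\mathscr{R}},\ \tau\text{ a translation},\ x\in\tau(R)\}$, $|\cdot|$ being Lebesgue measure. An Orlicz function is a convex increasing $\Phi:[0,\infty)\to[0,\infty)$ with $\Phi(0)=0$; $M_{\tilde{\mathscr{R}}}$ satisfies a weak $L^\Phi$ inequality if there is $C>0$ with $|\{M_{\tilde{\mathscr{R}}}f>\lambda\}|\leq\int_{\mathbb{R}^n}\Phi(C|f|/\lambda)$ for all $\lambda>0$ and all measurable $f$ with $\Phi(|f|)\in L^1$. $\Phi_d(t):=t(1+\log_+^dt)$, $\log_+t=\max(\log t,0)$. *)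

theory Defs
  imports "HOL-Analysis.Analysis" "HOL-Library.Landau_Symbols"
begin

definition finite_width :: "'a set set \<Rightarrow> bool" where
  "finite_width F \<longleftrightarrow> (\<exists>C. finite C \<and> \<Union>C = F \<and>
      (\<forall>G\<in>C. \<forall>A\<in>G. \<forall>B\<in>G. A \<subseteq> B \<or> B \<subseteq> A))"

definition max_op :: "'a::euclidean_space set set \<Rightarrow> ('a \<Rightarrow> real) \<Rightarrow> 'a \<Rightarrow> ennreal" where
  "max_op F f x = (SUP p \<in> {(R, a). R \<in> F \<and> x \<in> (\<lambda>y. a + y) ` R}.
      (\<integral>\<^sup>+ y. ennreal \<bar>f y\<bar> * indicator ((\<lambda>y. snd p + y) ` fst p) y \<partial>lebesgue)
        / emeasure lebesgue (fst p))"

definition orlicz :: "(real \<Rightarrow> real) \<Rightarrow> bool" where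
  "orlicz \<Phi> \<longleftrightarrow> convex_on {0..} \<Phi> \<and> mono_on {0..} \<Phi> \<and> \<Phi> 0 = 0 \<and> (\<forall>t\<ge>0. \<Phi> t \<ge> 0)"

definition weak_orlicz :: "'a::euclidean_space set set \<Rightarrow> (real \<Rightarrow> real) \<Rightarrow> bool" where
  "weak_orlicz F \<Phi> \<longleftrightarrow> (\<exists>C>0. \<forall>lam>0. \<forall>f. f \<in> borel_measurable lebesgue \<and>
      integrable lebesgue (\<lambda>x. \<Phi> \<bar>f x\<bar>) \<longrightarrow>
      outer_measure_of lebesgue {x. max_op F f x > ennreal lam}
        \<le> (\<integral>\<^sup>+ x. ennreal (\<Phi> (C * \<bar>f x\<bar> / lam)) \<partial>lebesgue))"

definition log_plus :: "real \<Rightarrow> real" where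
  "log_plus t = max (ln t) 0"

definition Phi_d :: "nat \<Rightarrow> real \<Rightarrow> real" where
  "Phi_d d t = t * (1 + log_plus t ^ d)"

definition dyadics :: "nat \<Rightarrow> real set" where
  "dyadics k = {(1/2) ^ j | j. j \<le> k}"

text \<open>Points of R^n, n = CARD('m) + 2, are written (u, v, w) with u the first n-2
  coordinates, v = x_{n-1}, w = x_n. The rectangle R x [0,1] for R in R_k with sides s.\<close>
definition rect_tilde :: "nat \<Rightarrow> real^'m \<Rightarrow> ((real^'m) \<times> real \<times> real) set" where
  "rect_tilde k s = {(u, v, w). (\<forall>i. 0 \<le> u $ i \<and> u $ i \<le> s $ i) \<and>
      0 \<le> v \<and> v \<le> (1/2) ^ ((CARD('m) + 1) * k) / (\<Prod>i\<in>UNIV. s $ i) \<and>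
      0 \<le> w \<and> w \<le> 1}"

definition R_tilde :: "((real^'m) \<times> real \<times> real) set set" where
  "R_tilde = (\<Union>k. {rect_tilde k s | s. \<forall>i. s $ i \<in> dyadics k})"

definition proj_last2 :: "((real^'m) \<times> real \<times> real) \<Rightarrow> real \<times> real" where
  "proj_last2 x = snd x"

end

theory Submission
  imports Defs
begin


lemma meas_cbox_cart: "(\<forall>i. a$i \<le> b$i) \<Longrightarrow> emeasure lborel (cbox a (b::real^'m)) = ennreal (\<Prod>i\<in>UNIV. b$i - a$i)"
proof -
  assume h: "\<forall>i. a$i \<le> b$i"
  have "a \<in> cbox a b" using h by (simp add: mem_box_cart(2))
  then have ne: "cbox a b \<noteq> {}" by blast
  have "emeasure lborel (cbox a b) = ennreal (measure lborel (cbox a b))"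
    using emeasure_lborel_cbox_finite[of a b] by (intro emeasure_eq_ennreal_measure) auto
  then show ?thesis using content_cbox_cart[OF ne] by simp
qed

lemma meas_box_cart: "(\<forall>i. a$i \<le> b$i) \<Longrightarrow> emeasure lborel (box a (b::real^'m)) = ennreal (\<Prod>i\<in>UNIV. b$i - a$i)"
  using meas_cbox_cart[of a b] by (simp add: emeasure_lborel_box_eq emeasure_lborel_cbox_eq)

lemma meas3: fixes A :: "(real^'m) set" and B D :: "real set"
  assumes "A \<in> sets lborel" "B \<in> sets lborel" "D \<in> sets lborel"
  shows "emeasure lebesgue (A \<times> B \<times> D) = emeasure lborel A * emeasure lborel B * emeasure lborel D"
proof -
  have BD: "B \<times> D \<in> sets (lborel::(real\<times>real) measure)" using assms
    by (metis lborel_prod pair_measureI)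
  have ABD: "A \<times> B \<times> D \<in> sets (lborel::((real^'m)\<times>real\<times>real) measure)"
    using assms BD by (metis lborel_prod pair_measureI)
  have "emeasure lebesgue (A \<times> B \<times> D) = emeasure (lborel::((real^'m)\<times>real\<times>real) measure) (A \<times> B \<times> D)"
    using ABD by simp
  also have "\<dots> = emeasure (lborel \<Otimes>\<^sub>M lborel) (A \<times> (B \<times> D))" by (simp add: lborel_prod)
  also have "\<dots> = emeasure lborel A * emeasure (lborel::(real\<times>real) measure) (B \<times> D)"
    by (rule lborel.emeasure_pair_measure_Times) (use assms BD in auto)
  also have "emeasure (lborel::(real\<times>real) measure) (B \<times> D) = emeasure (lborel \<Otimes>\<^sub>M lborel) (B \<times> D)"
    by (simp add: lborel_prod)
  also have "\<dots> = emeasure lborel B * emeasure lborel D"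
    by (rule lborel.emeasure_pair_measure_Times) (use assms in auto)
  finally show ?thesis by (simp add: mult.assoc)
qed


lemma rect_eq: "rect_tilde k (s::real^'m) = cbox 0 s \<times> {0..(1/2)^((CARD('m)+1)*k) / (\<Prod>i\<in>UNIV. s$i)} \<times> {0..1}"
  by (auto simp: rect_tilde_def mem_box_cart(2))

lemma meas_rect: assumes "\<forall>i. (s::real^'m)$i > 0"
  shows "emeasure lebesgue (rect_tilde k s) = ennreal ((1/2)^((CARD('m)+1)*k))"
proof -
  define V :: real where "V = (1/2)^((CARD('m)+1)*k)"
  have nz: "\<forall>i. s$i \<noteq> 0" using assms by (metis less_irrefl)
  have p: "(\<Prod>i\<in>UNIV. s$i) > 0" using assms by (simp add: prod_pos)
  have "emeasure lebesgue (rect_tilde k s) = ennreal (\<Prod>i\<in>UNIV. s$i - 0$i) * ennreal (V / (\<Prod>i\<in>UNIV. s$i)) * ennreal 1"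
    unfolding rect_eq V_def[symmetric]
    by (subst meas3) (use assms p in \<open>auto simp: meas_cbox_cart less_imp_le V_def\<close>)
  also have "\<dots> = ennreal V" using p nz by (simp add: ennreal_mult''[symmetric] V_def)
  finally show ?thesis unfolding V_def .
qed

definition sv :: "('m \<Rightarrow> nat) \<Rightarrow> real^'m" where "sv j = (\<chi> i. (1/2)^(j i))"
definition Bset :: "nat \<Rightarrow> ((real^'m)\<times>real\<times>real) set" where
  "Bset K = cbox 0 (\<chi> i. (1/2)^K) \<times> {0..(1/2)^((CARD('m)+1)*K)} \<times> {0..1}"
definition Pset :: "nat \<Rightarrow> ('m \<Rightarrow> nat) \<Rightarrow> ((real^'m)\<times>real\<times>real) set" where
  "Pset K j = box (\<chi> i. (1/2)^(j i + 1)) (sv j) \<times> {0<..<(1/2)^((CARD('m)+1)*K) / (\<Prod>i\<in>UNIV. sv j $ i)} \<times> {0<..<1}"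

lemma sv_pos: "sv j $ i > 0" by (simp add: sv_def)
lemma sv_prod: "(\<Prod>i\<in>UNIV. sv j $ i) > 0" "(\<Prod>i\<in>UNIV. sv j $ i) \<le> 1"
  by (auto simp: sv_def prod_pos intro!: prod_le_1 power_le_one)

lemma B_sub: assumes "\<forall>i. j i \<le> K" shows "(Bset K :: ((real^'m)\<times>real\<times>real) set) \<subseteq> rect_tilde K (sv j)"
proof -
  have d: "(1/2::real)^K \<le> (1/2)^(j i)" for i by (rule power_decreasing) (use assms in auto)
  have "cbox 0 (\<chi> i. (1/2::real)^K) \<subseteq> cbox 0 (sv j)"
  proof
    fix x :: "real^'m" assume "x \<in> cbox 0 (\<chi> i. (1/2::real)^K)"
    then have "\<forall>i. 0 \<le> x$i \<and> x$i \<le> (1/2)^K" by (simp add: mem_box_cart(2))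
    then show "x \<in> cbox 0 (sv j)" by (simp add: mem_box_cart(2) sv_def) (meson d order_trans)
  qed
  moreover have "(1/2::real)^((CARD('m)+1)*K) \<le> (1/2)^((CARD('m)+1)*K) / (\<Prod>i\<in>UNIV. sv j $ i)"
    using sv_prod[of j] by (simp add: le_divide_eq mult_le_cancel_left1)
  ultimately show ?thesis unfolding rect_eq Bset_def by auto
qed

lemma P_sub: "(Pset K j :: ((real^'m)\<times>real\<times>real) set) \<subseteq> rect_tilde K (sv j)"
proof
  fix x assume x: "x \<in> Pset K j"
  obtain u v w where xe: "x = (u,v,w)" by (cases x) auto
  have u: "\<forall>i. (1/2::real)^(j i + 1) < u$i \<and> u$i < sv j $ i" and vw: "0 < v" "v < (1/2)^((CARD('m)+1)*K) / (\<Prod>i\<in>UNIV. sv j $ i)" "0 < w" "w < 1"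
    using x unfolding xe Pset_def by (auto simp: mem_box_cart)
  have "\<forall>i. 0 \<le> u$i \<and> u$i \<le> sv j $ i"
  proof
    fix i
    have "(0::real) < (1/2)^(j i + 1)" by simp
    then show "0 \<le> u$i \<and> u$i \<le> sv j $ i" using u[rule_format, of i] by linarith
  qed
  then show "x \<in> rect_tilde K (sv j)" unfolding rect_eq xe using vw by (auto simp: mem_box_cart)
qed

lemma R_in: assumes "\<forall>i. j i \<le> K" shows "rect_tilde K (sv j) \<in> (R_tilde :: ((real^'m)\<times>real\<times>real) set set)"
proof -
  have "\<forall>i. sv j $ i \<in> dyadics K" using assms by (auto simp: sv_def dyadics_def)
  then show ?thesis unfolding R_tilde_def by blast
qed

lemma B_sets: "Bset K \<in> sets lebesgue"
proof -
  have "closed (Bset K)" unfolding Bset_def by (intro closed_Times closed_cbox closed_atLeastAtMost)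
  then have "Bset K \<in> sets borel" by (rule borel_closed)
  then show ?thesis by (intro sets_completionI_sets) simp
qed

lemma P_sets: "Pset K j \<in> sets lebesgue"
proof -
  have "open (Pset K j)" unfolding Pset_def by (intro open_Times open_box open_greaterThanLessThan)
  then have "Pset K j \<in> sets borel" by (rule borel_open)
  then show ?thesis by (intro sets_completionI_sets) simp
qed

lemma B_meas: "emeasure lebesgue (Bset K :: ((real^'m)\<times>real\<times>real) set) = ennreal (((1/2)^K)^CARD('m) * (1/2)^((CARD('m)+1)*K))"
  unfolding Bset_def
  by (subst meas3) (auto simp: meas_cbox_cart ennreal_mult''[symmetric])

lemma P_meas: "emeasure lebesgue (Pset K j :: ((real^'m)\<times>real\<times>real) set) = ennreal ((1/2)^((CARD('m)+1)*K) / 2^CARD('m))"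
proof -
  define V :: real where "V = (1/2)^((CARD('m)+1)*K)"
  have nz: "\<forall>a. (sv j :: real^'m) $ a \<noteq> 0" using sv_pos by (metis less_irrefl)
  have pr: "(\<Prod>i\<in>UNIV. (1/2::real)^(j i) / 2) = (\<Prod>i\<in>UNIV. (1/2)^(j i)) / 2^CARD('m)"
    by (simp add: prod_dividef)
  have "emeasure lebesgue (Pset K j) = ennreal ((\<Prod>i\<in>UNIV. sv j $ i) / 2^CARD('m)) * ennreal (V / (\<Prod>i\<in>UNIV. sv j $ i)) * ennreal 1"
    unfolding Pset_def V_def[symmetric]
    by (subst meas3) (use sv_prod[of j] in \<open>auto simp: meas_box_cart pr sv_def V_def\<close>)
  also have "\<dots> = ennreal (V / 2^CARD('m))" using sv_prod[of j] nz
    by (simp add: ennreal_mult''[symmetric] V_def)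
  finally show ?thesis unfolding V_def .
qed

lemma dyad_unique: assumes "(1/2::real)^(a+1) < x" "x < (1/2)^a" "(1/2)^(b+1) < x" "x < (1/2)^b"
  shows "a = b"
proof (rule ccontr)
  assume "a \<noteq> b"
  then consider "a + 1 \<le> b" | "b + 1 \<le> a" by linarith
  then show False
  proof cases
    case 1
    then have "(1/2::real)^b \<le> (1/2)^(a+1)" by (rule power_decreasing) auto
    then show False using assms by linarith
  next
    case 2
    then have "(1/2::real)^a \<le> (1/2)^(b+1)" by (rule power_decreasing) auto
    then show False using assms by linarith
  qed
qed

lemma P_disj: "disjoint_family_on (Pset K :: ('m \<Rightarrow> nat) \<Rightarrow> ((real^'m)\<times>real\<times>real) set) J"
unfolding disjoint_family_on_def
proof (intro ballI impI)
  fix j j' :: "'m \<Rightarrow> nat" assume "j \<noteq> j'"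
  then obtain i where i: "j i \<noteq> j' i" by auto
  show "Pset K j \<inter> Pset K j' = {}"
  proof (rule ccontr)
    assume "Pset K j \<inter> Pset K j' \<noteq> {}"
    then obtain u v w where "(u,v,w) \<in> Pset K j" "(u,v,w) \<in> Pset K j'" by auto
    then have "(1/2::real)^(j i+1) < u$i" "u$i < (1/2)^(j i)" "(1/2::real)^(j' i+1) < u$i" "u$i < (1/2)^(j' i)"
      unfolding Pset_def by (auto simp: mem_box_cart sv_def)
    then show False using dyad_unique i by blast
  qed
qed


lemma maxop_ge:
  fixes j :: "'m::finite \<Rightarrow> nat" and N :: real
  assumes jK: "\<forall>i. j i \<le> K" and x: "x \<in> rect_tilde K (sv j)" and N: "N \<ge> 0"
  shows "max_op (R_tilde :: ((real^'m)\<times>real\<times>real) set set) (\<lambda>y. N * indicator (Bset K) y) x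
           \<ge> ennreal (N * ((1/2)^K)^CARD('m))"
proof -
  define B where "B = (Bset K :: ((real^'m)\<times>real\<times>real) set)"
  define R where "R = (rect_tilde K (sv j) :: ((real^'m)\<times>real\<times>real) set)"
  define V :: real where "V = (1/2)^((CARD('m)+1)*K)"
  have V: "V > 0" unfolding V_def by simp
  have RV: "emeasure lebesgue R = ennreal V" unfolding R_def V_def by (rule meas_rect) (simp add: sv_pos)
  have BR: "B \<subseteq> R" unfolding R_def B_def using jK by (rule B_sub)
  have tr: "(\<lambda>y. 0 + y) ` R = R" by simp
  have mem: "(R, 0) \<in> {(R, a). R \<in> (R_tilde :: ((real^'m)\<times>real\<times>real) set set) \<and> x \<in> (\<lambda>y. a + y) ` R}"
    using R_in[OF jK] x unfolding R_def by simp
  have "(\<integral>\<^sup>+ y. ennreal \<bar>N * indicator (B) y\<bar> * indicator R y \<partial>lebesgue)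
        = (\<integral>\<^sup>+ y. ennreal N * indicator (B) y \<partial>lebesgue)"
    by (intro nn_integral_cong) (use BR N in \<open>auto simp: indicator_def\<close>)
  also have "\<dots> = ennreal N * emeasure lebesgue (B)"
    unfolding B_def using B_sets by (rule nn_integral_cmult_indicator)
  also have "\<dots> = ennreal (N * ((1/2)^K)^CARD('m) * V)"
    unfolding B_def B_meas V_def using N by (simp add: ennreal_mult''[symmetric] mult.assoc)
  finally have I: "(\<integral>\<^sup>+ y. ennreal \<bar>N * indicator (B) y\<bar> * indicator R y \<partial>lebesgue) = ennreal (N * ((1/2)^K)^CARD('m) * V)" .
  have e1: "ennreal (N * ((1/2)^K)^CARD('m)) = ennreal (N * ((1/2)^K)^CARD('m) * V) / ennreal V"
    using V N by (simp add: divide_ennreal)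
  have e2: "(\<integral>\<^sup>+ y. ennreal \<bar>N * indicator B y\<bar> * indicator ((\<lambda>y. snd (R, 0::(real^'m)\<times>real\<times>real) + y) ` fst (R, 0::(real^'m)\<times>real\<times>real)) y \<partial>lebesgue)
        / emeasure lebesgue (fst (R, 0::(real^'m)\<times>real\<times>real)) = ennreal (N * ((1/2)^K)^CARD('m) * V) / ennreal V"
    using I RV by simp
  have e3: "(\<integral>\<^sup>+ y. ennreal \<bar>N * indicator B y\<bar> * indicator ((\<lambda>y. snd (R, 0::(real^'m)\<times>real\<times>real) + y) ` fst (R, 0::(real^'m)\<times>real\<times>real)) y \<partial>lebesgue)
        / emeasure lebesgue (fst (R, 0::(real^'m)\<times>real\<times>real)) \<le> max_op (R_tilde :: ((real^'m)\<times>real\<times>real) set set) (\<lambda>y. N * indicator B y) x"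
    unfolding max_op_def by (rule SUP_upper[OF mem])
  have "ennreal (N * ((1/2)^K)^CARD('m)) \<le> max_op (R_tilde :: ((real^'m)\<times>real\<times>real) set set) (\<lambda>y. N * indicator B y) x"
    using e1 e2 e3 by simp
  then show ?thesis unfolding B_def .
qed


lemma proj_rect: "(\<forall>i. (s::real^'m::finite)$i \<ge> 0) \<Longrightarrow>
   proj_last2 ` rect_tilde k s = {0..(1/2)^((CARD('m)+1)*k) / (\<Prod>i\<in>UNIV. s$i)} \<times> {0..1}"
proof -
  assume s: "\<forall>i. s$i \<ge> 0"
  show ?thesis
  proof
    show "proj_last2 ` rect_tilde k s \<subseteq> {0..(1/2)^((CARD('m)+1)*k) / (\<Prod>i\<in>UNIV. s$i)} \<times> {0..1}"
      by (auto simp: proj_last2_def rect_tilde_def)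
    show "{0..(1/2)^((CARD('m)+1)*k) / (\<Prod>i\<in>UNIV. s$i)} \<times> {0..1} \<subseteq> proj_last2 ` rect_tilde k s"
    proof
      fix p assume p: "p \<in> {0..(1/2::real)^((CARD('m)+1)*k) / (\<Prod>i\<in>UNIV. s$i)} \<times> {0..(1::real)}"
      obtain v w where pe: "p = (v,w)" by (cases p)
      have "(0::real^'m, v, w) \<in> rect_tilde k s" using p s unfolding pe rect_tilde_def by auto
      moreover have "p = proj_last2 (0::real^'m, v, w)" unfolding pe proj_last2_def by simp
      ultimately show "p \<in> proj_last2 ` rect_tilde k s" by blast
    qed
  qed
qed

lemma fw: "finite_width ((\<lambda>R. proj_last2 ` R) ` (R_tilde :: ((real^'m::finite) \<times> real \<times> real) set set))"
proof -
  let ?F = "(\<lambda>R. proj_last2 ` R) ` (R_tilde :: ((real^'m::finite) \<times> real \<times> real) set set)"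
  have shape: "\<exists>a. A = {0..a} \<times> {0..1::real}" if AF: "A \<in> ?F" for A
  proof -
    obtain k s where As: "A = proj_last2 ` rect_tilde k (s::real^'m)" and s: "\<forall>i. s$i \<in> dyadics k"
      using AF unfolding R_tilde_def by blast
    have "\<forall>i. s$i \<ge> 0"
    proof
      fix i
      obtain j where "s$i = (1/2)^j" using s[rule_format, of i] unfolding dyadics_def by blast
      then show "s$i \<ge> 0" by simp
    qed
    then have "proj_last2 ` rect_tilde k s = {0..(1/2)^((CARD('m)+1)*k) / (\<Prod>i\<in>UNIV. s$i)} \<times> {0..1}"
      by (rule proj_rect)
    then show ?thesis unfolding As by blast
  qed
  have ch: "\<forall>A\<in>?F. \<forall>B\<in>?F. A \<subseteq> B \<or> B \<subseteq> A"
  proof (intro ballI)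
    fix A B assume A: "A \<in> ?F" and B: "B \<in> ?F"
    obtain a where A1: "A = {0..a} \<times> {0..1::real}" using shape[OF A] by blast
    obtain b where B1: "B = {0..b} \<times> {0..1::real}" using shape[OF B] by blast
    note AB = A1 B1
    show "A \<subseteq> B \<or> B \<subseteq> A"
    proof (cases "a \<le> b")
      case True
      then have "A \<subseteq> B" using AB by auto
      then show ?thesis by blast
    next
      case False
      then have "B \<subseteq> A" using AB by auto
      then show ?thesis by blast
    qed
  qed
  have fin: "finite {?F} \<and> \<Union>{?F} = ?F \<and> (\<forall>G\<in>{?F}. \<forall>A\<in>G. \<forall>B\<in>G. A \<subseteq> B \<or> B \<subseteq> A)"
    using ch by simp
  show ?thesis unfolding finite_width_def by (rule exI[of _ "{?F}"], rule fin)
qed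



lemma asym:
  fixes \<Phi> :: "real \<Rightarrow> real" and m :: nat and C :: real
  assumes o: "\<Phi> \<in> o[at_top](Phi_d m)" and m: "m \<ge> 1" and C: "C > 0"
  shows "\<exists>K::nat. \<Phi> (2*C*2^(m*K)) * 2^m < real (K+1)^m * 2^(m*K)"
proof -
  define A :: real where "A = 1 + (2*real m)^m"
  have A: "A > 0" unfolding A_def by (simp add: add_pos_nonneg)
  define \<epsilon> :: real where "\<epsilon> = 1 / (4*C*2^m*A)"
  have eps: "\<epsilon> > 0" unfolding \<epsilon>_def using C A by simp
  have "eventually (\<lambda>x. norm (\<Phi> x) \<le> \<epsilon> * norm (Phi_d m x)) at_top"
    using landau_o.smallD[OF o eps] .
  then obtain T0 where T0: "\<And>x. x \<ge> T0 \<Longrightarrow> norm (\<Phi> x) \<le> \<epsilon> * norm (Phi_d m x)"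
    by (auto simp: eventually_at_top_linorder)
  define K :: nat where "K = nat \<lceil>max (max (T0/(2*C)) (1/(2*C))) (max \<bar>ln (2*C)\<bar> 1)\<rceil>"
  have K1: "real K \<ge> T0/(2*C)" "real K \<ge> 1/(2*C)" "real K \<ge> \<bar>ln (2*C)\<bar>" "real K \<ge> 1"
    unfolding K_def by linarith+
  define T where "T = 2*C*2^(m*K)"
  have KT: "real K \<le> 2^(m*K)"
  proof -
    have "real K < 2^K"
    proof (induction K)
      case (Suc n)
      have "(1::real) \<le> 2^n" by simp
      then have "1 + real n < 2*2^n" using Suc.IH by linarith
      then show ?case by simp
    qed simp
    also have "(2::real)^K \<le> 2^(m*K)" by (rule power_increasing) (use m in auto)
    finally show ?thesis by simp
  qed
  have TK: "T \<ge> 2*C*real K" unfolding T_def using KT C by simp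
  have T0T: "T \<ge> T0" using TK K1(1) C by (simp add: field_simps)
  have T1: "T \<ge> 1" using TK K1(2) C by (simp add: field_simps)
  have lnT: "ln T = ln (2*C) + real (m*K) * ln 2"
    unfolding T_def using C by (simp add: ln_mult ln_realpow)
  have lnT0: "ln T \<ge> 0" using T1 by simp
  have "real (m*K) * ln 2 \<le> real (m*K)" using ln_2_less_1 by (simp add: mult_left_le)
  moreover have "real K \<le> real m * real K" using m by (simp add: mult_le_cancel_right1)
  moreover have "ln (2*C) \<le> real K" using K1(3) by linarith
  ultimately have lnT2: "ln T \<le> 2*real m*real K" using lnT by simp
  have lp: "log_plus T = ln T" unfolding log_plus_def using lnT0 by simp
  have "(ln T)^m \<le> (2*real m*real K)^m" using lnT2 lnT0 by (rule power_mono)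
  also have "\<dots> \<le> (2*real m)^m * real (K+1)^m"
  proof -
    have "real K ^ m \<le> real (K+1)^m" by (rule power_mono) auto
    then have "(2*real m)^m * real K ^ m \<le> (2*real m)^m * real (K+1)^m" by (simp add: mult_left_mono)
    then show ?thesis by (simp add: power_mult_distrib)
  qed
  finally have lnm: "(ln T)^m \<le> (2*real m)^m * real (K+1)^m" .
  have one: "1 \<le> real (K+1)^m" by simp
  have PD: "Phi_d m T \<le> T * A * real (K+1)^m"
  proof -
    have "1 + (ln T)^m \<le> A * real (K+1)^m" unfolding A_def using lnm one by (simp only: distrib_right mult_1_left)
    then have "T * (1 + (ln T)^m) \<le> T * (A * real (K+1)^m)" using T1 by (simp add: mult_left_mono)
    then show ?thesis unfolding Phi_d_def lp by (simp add: mult.assoc)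
  qed
  have PD0: "Phi_d m T \<ge> 0" unfolding Phi_d_def lp using T1 lnT0 by simp
  have "\<Phi> T \<le> \<epsilon> * Phi_d m T" using T0[OF T0T] PD0 by simp
  also have "\<dots> \<le> \<epsilon> * (T * A * real (K+1)^m)" using PD eps by (simp add: mult_left_mono)
  finally have "\<Phi> T * 2^m \<le> \<epsilon> * (T * A * real (K+1)^m) * 2^m" by simp
  also have "\<dots> = real (K+1)^m * 2^(m*K) / 2"
    unfolding \<epsilon>_def T_def using C A by (simp add: field_simps)
  also have "\<dots> < real (K+1)^m * 2^(m*K)" by simp
  finally show ?thesis unfolding T_def by blast
qed


theorem mainTheorem8:
  shows "finite_width ((\<lambda>R. proj_last2 ` R) ` (R_tilde :: ((real^'m) \<times> real \<times> real) set set))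
    \<and> (\<forall>\<Phi>. orlicz \<Phi> \<and> \<Phi> \<in> o[at_top](Phi_d CARD('m)) \<longrightarrow>
         \<not> weak_orlicz (R_tilde :: ((real^'m) \<times> real \<times> real) set set) \<Phi>)"
proof (intro conjI allI impI)
  show "finite_width ((\<lambda>R. proj_last2 ` R) ` (R_tilde :: ((real^'m) \<times> real \<times> real) set set))"
    by (rule fw)
  fix \<Phi> :: "real \<Rightarrow> real"
  assume h: "orlicz \<Phi> \<and> \<Phi> \<in> o[at_top](Phi_d CARD('m))"
  have \<Phi>0: "\<Phi> 0 = 0" and \<Phi>pos: "\<And>t. t \<ge> 0 \<Longrightarrow> \<Phi> t \<ge> 0" using h unfolding orlicz_def by auto
  show "\<not> weak_orlicz (R_tilde :: ((real^'m) \<times> real \<times> real) set set) \<Phi>"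
  proof
    assume "weak_orlicz (R_tilde :: ((real^'m) \<times> real \<times> real) set set) \<Phi>"
    then obtain C :: real where C: "C > 0" and W: "\<And>lam f. lam > 0 \<Longrightarrow> f \<in> borel_measurable lebesgue \<Longrightarrow>
        integrable lebesgue (\<lambda>x. \<Phi> \<bar>f x\<bar>) \<Longrightarrow>
        outer_measure_of lebesgue {x. max_op (R_tilde :: ((real^'m) \<times> real \<times> real) set set) f x > ennreal lam}
        \<le> (\<integral>\<^sup>+ x. ennreal (\<Phi> (C * \<bar>f x\<bar> / lam)) \<partial>lebesgue)"
      unfolding weak_orlicz_def by blast
    define m where "m = CARD('m)"
    have m1: "m \<ge> 1" unfolding m_def by (simp add: Suc_leI)
    obtain K :: nat where K: "\<Phi> (2*C*2^(m*K)) * 2^m < real (K+1)^m * 2^(m*K)"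
      using asym[of \<Phi> m C] h m1 C unfolding m_def by auto
    define N :: real where "N = 2*2^(m*K)"
    have N0: "N \<ge> 0" unfolding N_def by simp
    define B where "B = (Bset K :: ((real^'m)\<times>real\<times>real) set)"
    define f where "f = (\<lambda>y::(real^'m)\<times>real\<times>real. N * indicator B y)"
    define V :: real where "V = (1/2)^((m+1)*K)"
    have V: "V > 0" unfolding V_def by simp
    define J where "J = (PiE UNIV (\<lambda>_. {..K}) :: ('m \<Rightarrow> nat) set)"
    have Nq: "N * ((1/2)^K)^m = 2"
    proof -
      have "((1/2::real)^K)^m = (1/2)^(m*K)" by (simp add: power_mult[symmetric] mult.commute)
      then show ?thesis unfolding N_def by (simp add: power_one_over)
    qed
    have lvl: "(\<Union>j\<in>J. (Pset K j :: ((real^'m)\<times>real\<times>real) set)) \<subseteq>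
        {x. max_op (R_tilde :: ((real^'m) \<times> real \<times> real) set set) f x > ennreal 1}"
    proof
      fix x assume "x \<in> (\<Union>j\<in>J. (Pset K j :: ((real^'m)\<times>real\<times>real) set))"
      then obtain j where j: "j \<in> J" and xP: "x \<in> Pset K j" by blast
      have jK: "\<forall>i. j i \<le> K" using j unfolding J_def by auto
      have xR: "x \<in> rect_tilde K (sv j)" using xP P_sub by blast
      have "ennreal (N * ((1/2)^K)^CARD('m)) \<le> max_op (R_tilde :: ((real^'m) \<times> real \<times> real) set set) f x"
        unfolding f_def B_def by (rule maxop_ge[OF jK xR N0])
      then have g: "ennreal 2 \<le> max_op (R_tilde :: ((real^'m) \<times> real \<times> real) set set) f x"
        using Nq unfolding m_def by simp
      have "ennreal 1 < max_op (R_tilde :: ((real^'m) \<times> real \<times> real) set set) f x"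
        by (rule less_le_trans[OF _ g]) simp
      then show "x \<in> {x. max_op (R_tilde :: ((real^'m) \<times> real \<times> real) set set) f x > ennreal 1}"
        by simp
    qed
    have finJ: "finite J" unfolding J_def by (simp add: finite_PiE)
    have cardJ: "card J = (K+1)^m" unfolding J_def m_def by (simp add: card_PiE)
    have Usets: "(\<Union>j\<in>J. (Pset K j :: ((real^'m)\<times>real\<times>real) set)) \<in> sets lebesgue"
      using finJ P_sets by blast
    have "emeasure lebesgue (\<Union>j\<in>J. (Pset K j :: ((real^'m)\<times>real\<times>real) set))
          = (\<Sum>j\<in>J. emeasure lebesgue (Pset K j :: ((real^'m)\<times>real\<times>real) set))"
      by (rule sum_emeasure[symmetric]) (use finJ P_sets P_disj in auto)
    also have "\<dots> = (\<Sum>j\<in>J. ennreal (V / 2^m))" unfolding V_def m_def by (simp add: P_meas)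
    also have "\<dots> = ennreal (real (K+1)^m * (V / 2^m))" 
      using cardJ V by (simp add: ennreal_of_nat_eq_real_of_nat ennreal_mult[symmetric])
    finally have LHS: "ennreal (real (K+1)^m * (V / 2^m)) \<le>
        outer_measure_of lebesgue {x. max_op (R_tilde :: ((real^'m) \<times> real \<times> real) set set) f x > ennreal 1}"
      using outer_measure_of_mono[OF lvl, of lebesgue] Usets by simp
    have fm: "f \<in> borel_measurable lebesgue" unfolding f_def B_def by (intro borel_measurable_times borel_measurable_const borel_measurable_indicator B_sets)
    have fint: "integrable lebesgue (\<lambda>x. \<Phi> \<bar>f x\<bar>)"
    proof -
      have eq: "(\<lambda>x. \<Phi> \<bar>f x\<bar>) = (\<lambda>x. \<Phi> N * indicator B x)"
        using \<Phi>0 N0 unfolding f_def by (auto simp: indicator_def fun_eq_iff)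
      have fin: "emeasure lebesgue B < \<infinity>" unfolding B_def B_meas by simp
      have "integrable lebesgue (indicat_real B)"
        by (rule integrable_real_indicator) (use fin in \<open>auto simp: B_def B_sets\<close>)
      then show ?thesis unfolding eq by (rule integrable_mult_right)
    qed
    have "(\<integral>\<^sup>+ x. ennreal (\<Phi> (C * \<bar>f x\<bar> / 1)) \<partial>lebesgue) = (\<integral>\<^sup>+ x. ennreal (\<Phi> (C * N)) * indicator B x \<partial>lebesgue)"
      using \<Phi>0 N0 unfolding f_def by (intro nn_integral_cong) (auto simp: indicator_def)
    also have "\<dots> = ennreal (\<Phi> (C * N)) * emeasure lebesgue B"
      unfolding B_def using B_sets by (rule nn_integral_cmult_indicator)
    also have "\<dots> = ennreal (\<Phi> (C * N) * (((1/2)^K)^m * V))"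
      unfolding B_def B_meas V_def m_def using \<Phi>pos[of "C*N"] C N0 by (simp add: ennreal_mult'')
    finally have RHS: "(\<integral>\<^sup>+ x. ennreal (\<Phi> (C * \<bar>f x\<bar> / 1)) \<partial>lebesgue) = ennreal (\<Phi> (C * N) * (((1/2)^K)^m * V))" .
    have "ennreal (real (K+1)^m * (V / 2^m)) \<le> ennreal (\<Phi> (C * N) * (((1/2)^K)^m * V))"
      using LHS W[OF _ fm fint, of 1] RHS by simp
    then have ineq: "real (K+1)^m * (V / 2^m) \<le> \<Phi> (C * N) * (((1/2)^K)^m * V)"
      using \<Phi>pos[of "C*N"] C N0 V by (simp add: ennreal_le_iff)
    have a: "real (K+1)^m / 2^m \<le> \<Phi> (C * N) * ((1/2)^K)^m"
      using ineq V by (simp add: field_simps)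
    have q: "((1/2::real)^K)^m * 2^(m*K) = 1"
      by (simp add: power_mult[symmetric] mult.commute power_one_over)
    have "real (K+1)^m * 2^(m*K) \<le> \<Phi> (C * N) * 2^m"
    proof -
      have "real (K+1)^m \<le> \<Phi> (C * N) * ((1/2)^K)^m * 2^m" using a by (simp add: field_simps)
      then have "real (K+1)^m * 2^(m*K) \<le> \<Phi> (C * N) * ((1/2)^K)^m * 2^m * 2^(m*K)"
        by (simp add: mult_right_mono)
      also have "\<dots> = \<Phi> (C * N) * 2^m * (((1/2)^K)^m * 2^(m*K))" by (simp add: algebra_simps)
      finally show ?thesis using q by simp
    qed
    moreover have "C * N = 2*C*2^(m*K)" unfolding N_def by simp
    ultimately show False using K by simp
  qed
qed

end
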